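(* Let $\mathcal{T}$ be an $\aleph_1$-directed poset, $X:\mathcal{T}\to\mathbf{Set}_*$ a diagram of pointed sets and $A$ an abelian group. Then $H(X,A)=0$, i.e. the natural map $\rho:(\lim_\mathcal{T}X)\wedge A\to\lim_\mathcal{T}(X\wedge A)$ is an isomorphism.
   Context: A poset $\mathcal{T}$ is $\aleph_1$-directed if every countable subset has an upper bound in $\mathcal{T}$; it is regarded as a category with a single morphism $t\to s$ whenever $t\ge s$. For a pointed set $Y$, $Y\wedge A:=\bigoplus_{Y\setminus\{*\}}A$ (finitely supported pointed maps $Y\to A$), functorial via $f_*(sv)=f(s)v$, where $sv$ is the element with value $v$ at $s$ ($*v=0$). $\rho(xv)(t)=x(t)v$; $G(X,A):=\lim_\mathcal{T}(X\wedge A)$, $K(X,A)=\mathrm{Im}\,\rho$, $H(X,A):=G(X,A)/K(X,A)$. *)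

theory Defs
  imports Main "HOL-Library.Countable_Set"
begin

definition aleph1_directed :: "('i::order) set \<Rightarrow> bool" where
  "aleph1_directed T \<longleftrightarrow> (\<forall>S\<subseteq>T. countable S \<longrightarrow> (\<exists>u\<in>T. \<forall>s\<in>S. s \<le> u))"

text \<open>A diagram of pointed sets over the poset: carrier X t, base point bp t, and for
s \<le> t (i.e. a morphism t \<rightarrow> s) a pointed map F t s : X t \<rightarrow> X s, functorially.\<close>
definition pointed_diagram ::
  "('i::order \<Rightarrow> 'a set) \<Rightarrow> ('i \<Rightarrow> 'a) \<Rightarrow> ('i \<Rightarrow> 'i \<Rightarrow> 'a \<Rightarrow> 'a) \<Rightarrow> bool" where
  "pointed_diagram X bp F \<longleftrightarrow>
     (\<forall>t. bp t \<in> X t) \<and>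
     (\<forall>t s x. s \<le> t \<longrightarrow> x \<in> X t \<longrightarrow> F t s x \<in> X s) \<and>
     (\<forall>t s. s \<le> t \<longrightarrow> F t s (bp t) = bp s) \<and>
     (\<forall>t x. x \<in> X t \<longrightarrow> F t t x = x) \<and>
     (\<forall>t s r x. r \<le> s \<longrightarrow> s \<le> t \<longrightarrow> x \<in> X t \<longrightarrow> F s r (F t s x) = F t r x)"

text \<open>The limit of the diagram (compatible families); its base point is bp itself.\<close>
definition lim_set ::
  "('i::order \<Rightarrow> 'a set) \<Rightarrow> ('i \<Rightarrow> 'i \<Rightarrow> 'a \<Rightarrow> 'a) \<Rightarrow> ('i \<Rightarrow> 'a) set" where
  "lim_set X F = {x. (\<forall>t. x t \<in> X t) \<and> (\<forall>t s. s \<le> t \<longrightarrow> F t s (x t) = x s)}"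

text \<open>Y \<and> A for a pointed set (Y, y0): finitely supported maps Y \<rightarrow> A vanishing at y0.\<close>
definition smash :: "'a set \<Rightarrow> 'a \<Rightarrow> ('a \<Rightarrow> 'b::ab_group_add) set" where
  "smash Y y0 = {g. g y0 = 0 \<and> finite {y. g y \<noteq> 0} \<and> (\<forall>y. y \<notin> Y \<longrightarrow> g y = 0)}"

text \<open>Functoriality f_* (s v) = f(s) v, extended additively; z0 is the base point of the target.\<close>
definition push :: "('a \<Rightarrow> 'c) \<Rightarrow> 'c \<Rightarrow> ('a \<Rightarrow> 'b::ab_group_add) \<Rightarrow> 'c \<Rightarrow> 'b" where
  "push f z0 g = (\<lambda>z. if z = z0 then 0 else (\<Sum>y\<in>{y. g y \<noteq> 0 \<and> f y = z}. g y))"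

definition G_lim ::
  "('i::order \<Rightarrow> 'a set) \<Rightarrow> ('i \<Rightarrow> 'a) \<Rightarrow> ('i \<Rightarrow> 'i \<Rightarrow> 'a \<Rightarrow> 'a) \<Rightarrow> ('i \<Rightarrow> 'a \<Rightarrow> 'b::ab_group_add) set" where
  "G_lim X bp F = {\<phi>. (\<forall>t. \<phi> t \<in> smash (X t) (bp t)) \<and>
                      (\<forall>t s. s \<le> t \<longrightarrow> push (F t s) (bp s) (\<phi> t) = \<phi> s)}"

text \<open>The natural map rho : (lim X) \<and> A \<rightarrow> lim (X \<and> A), rho(x v)(t) = x(t) v.\<close>
definition rho :: "('i \<Rightarrow> 'a) \<Rightarrow> (('i \<Rightarrow> 'a) \<Rightarrow> 'b::ab_group_add) \<Rightarrow> 'i \<Rightarrow> 'a \<Rightarrow> 'b" where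
  "rho bp g = (\<lambda>t. push (\<lambda>x. x t) (bp t) g)"

end

theory Submission imports Defs begin

lemma push_eq:
  assumes "finite S" "{y. g y \<noteq> 0} \<subseteq> S"
  shows "push f z0 g z = (if z = z0 then 0 else sum g {y\<in>S. f y = z})"
  unfolding push_def
  using assms by (auto intro!: sum.mono_neutral_left)

lemma push_comp:
  fixes h :: "'a \<Rightarrow> 'b::ab_group_add"
  assumes fin: "finite {y. h y \<noteq> 0}" and fz: "f z0 = z1"
  shows "push f z1 (push g z0 h) = push (\<lambda>y. f (g y)) z1 h"
proof
  fix z
  define S where "S = {y. h y \<noteq> 0}"
  have fS: "finite S" using fin S_def by simp
  have pg: "\<And>w. push g z0 h w = (if w = z0 then 0 else sum h {y\<in>S. g y = w})"
    by (rule push_eq) (use fS S_def in auto)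
  have sub: "{w. push g z0 h w \<noteq> 0} \<subseteq> g ` S"
  proof
    fix w assume "w \<in> {w. push g z0 h w \<noteq> 0}"
    then have "{y\<in>S. g y = w} \<noteq> {}"
    proof (intro notI)
      assume "{y\<in>S. g y = w} = {}"
      then have "push g z0 h w = 0" using pg[of w] by (simp only: sum.empty if_cancel)
      then show False using \<open>w \<in> {w. push g z0 h w \<noteq> 0}\<close> by simp
    qed
    then show "w \<in> g ` S" by auto
  qed
  show "push f z1 (push g z0 h) z = push (\<lambda>y. f (g y)) z1 h z"
  proof (cases "z = z1")
    case True then show ?thesis by (simp add: push_def)
  next
    case False
    have "push f z1 (push g z0 h) z = sum (push g z0 h) {w\<in>g ` S. f w = z}"
      using push_eq[OF finite_imageI[OF fS] sub, of f z1 z] False by simp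
    also have "\<dots> = (\<Sum>w\<in>{w\<in>g ` S. f w = z}. sum h {y\<in>S. g y = w})"
      by (rule sum.cong) (use pg False fz in auto)
    also have "\<dots> = sum h (\<Union>w\<in>{w\<in>g ` S. f w = z}. {y\<in>S. g y = w})"
      by (rule sum.UNION_disjoint[symmetric]) (use fS in auto)
    also have "(\<Union>w\<in>{w\<in>g ` S. f w = z}. {y\<in>S. g y = w}) = {y\<in>S. f (g y) = z}"
      by auto
    also have "sum h {y\<in>S. f (g y) = z} = push (\<lambda>y. f (g y)) z1 h z"
      using push_eq[OF fS, of h "\<lambda>y. f (g y)" z1 z] False S_def by simp
    finally show ?thesis .
  qed
qed

lemma push_cong:
  assumes "\<And>y. g y \<noteq> 0 \<Longrightarrow> f y = f' y"
  shows "push f z0 g = push f' z0 g"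
  unfolding push_def using assms by (intro ext) (auto intro!: sum.cong)

definition sp :: "('a \<Rightarrow> 'b::zero) \<Rightarrow> 'a set" where "sp g = {y. g y \<noteq> 0}"

context
  fixes X :: "'i::order \<Rightarrow> 'a set" and bp :: "'i \<Rightarrow> 'a"
    and F :: "'i \<Rightarrow> 'i \<Rightarrow> 'a \<Rightarrow> 'a"
  assumes dir: "aleph1_directed (UNIV :: 'i set)"
    and pd: "pointed_diagram X bp F"
begin

lemma pdu: "(\<forall>t. bp t \<in> X t) \<and>
     (\<forall>t s x. s \<le> t \<longrightarrow> x \<in> X t \<longrightarrow> F t s x \<in> X s) \<and>
     (\<forall>t s. s \<le> t \<longrightarrow> F t s (bp t) = bp s) \<and>
     (\<forall>t x. x \<in> X t \<longrightarrow> F t t x = x) \<and>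
     (\<forall>t s r x. r \<le> s \<longrightarrow> s \<le> t \<longrightarrow> x \<in> X t \<longrightarrow> F s r (F t s x) = F t r x)"
  using pd unfolding pointed_diagram_def .

lemma bpX: "bp t \<in> X t" using conjunct1[OF pdu] by (rule spec)
lemma FX: "s \<le> t \<Longrightarrow> x \<in> X t \<Longrightarrow> F t s x \<in> X s"
  using conjunct1[OF conjunct2[OF pdu]] by blast
lemma Fbp: "s \<le> t \<Longrightarrow> F t s (bp t) = bp s"
  using conjunct1[OF conjunct2[OF conjunct2[OF pdu]]] by blast
lemma Fid: "x \<in> X t \<Longrightarrow> F t t x = x"
  using conjunct1[OF conjunct2[OF conjunct2[OF conjunct2[OF pdu]]]] by blast
lemma Fcomp: "r \<le> s \<Longrightarrow> s \<le> t \<Longrightarrow> x \<in> X t \<Longrightarrow> F s r (F t s x) = F t r x"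
  using conjunct2[OF conjunct2[OF conjunct2[OF conjunct2[OF pdu]]]] by blast

lemma ubC: assumes "countable (S::'i set)" shows "\<exists>u. \<forall>s\<in>S. s \<le> u"
proof -
  have "\<forall>S\<subseteq>(UNIV::'i set). countable S \<longrightarrow> (\<exists>u\<in>UNIV. \<forall>s\<in>S. s \<le> u)"
    using dir unfolding aleph1_directed_def .
  then have "\<exists>u\<in>UNIV. \<forall>s\<in>S. s \<le> u" using assms by blast
  then show ?thesis by simp
qed

lemma ubfin: "finite (S::'i set) \<Longrightarrow> \<exists>u. \<forall>s\<in>S. s \<le> u"
  by (rule ubC) (rule countable_finite)

lemma ub2: "\<exists>u. (s::'i) \<le> u \<and> t \<le> u"
proof -
  obtain u where "\<forall>x\<in>{s,t}. x \<le> u" using ubfin[of "{s,t}"] by auto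
  then show ?thesis by auto
qed

lemma bp_lim: "bp \<in> lim_set X F"
  unfolding lim_set_def using bpX Fbp by simp

lemma smashD:
  assumes "g \<in> smash Y y0"
  shows "g y0 = 0" "finite {y. g y \<noteq> 0}" "\<And>y. y \<notin> Y \<Longrightarrow> g y = 0"
  using assms unfolding smash_def by auto

lemma smash_lim: "g \<in> smash (lim_set X F) bp \<Longrightarrow> g x \<noteq> 0 \<Longrightarrow> x \<in> lim_set X F"
  using smashD(3)[of g "lim_set X F" bp x] by auto

lemma limD1: "x \<in> lim_set X F \<Longrightarrow> x t \<in> X t" unfolding lim_set_def by simp
lemma limD2: "x \<in> lim_set X F \<Longrightarrow> s \<le> t \<Longrightarrow> F t s (x t) = x s" unfolding lim_set_def by simp

lemma sep:
  assumes fD: "finite D" and DL: "D \<subseteq> lim_set X F"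
  shows "\<exists>t::'i. inj_on (\<lambda>x. x t) D"
proof -
  define P where "P = {p\<in>D\<times>D. fst p \<noteq> snd p}"
  define \<tau> where "\<tau> p = (SOME t::'i. fst p t \<noteq> snd p t)" for p :: "('i \<Rightarrow> 'a) \<times> ('i \<Rightarrow> 'a)"
  have tau: "fst p (\<tau> p) \<noteq> snd p (\<tau> p)" if "p \<in> P" for p
  proof -
    have "fst p \<noteq> snd p" using that P_def by simp
    then have "\<exists>t. fst p t \<noteq> snd p t" by (simp add: fun_eq_iff)
    then have "(\<lambda>t. fst p t \<noteq> snd p t) (SOME t. fst p t \<noteq> snd p t)" by (rule someI_ex)
    then show ?thesis by (simp add: \<tau>_def)
  qed
  have "P \<subseteq> D \<times> D" unfolding P_def by blast
  moreover have "finite (D \<times> D)" by (rule finite_cartesian_product[OF fD fD])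
  ultimately have "finite P" by (rule finite_subset)
  then have "finite (\<tau> ` P)" by (rule finite_imageI)
  then obtain u where u: "\<forall>s\<in>\<tau> ` P. s \<le> u"
    using ubfin by blast
  show ?thesis
  proof (rule exI[of _ u], rule inj_onI, rule ccontr)
    fix x y assume xD: "x \<in> D" and yD: "y \<in> D" and eq: "x u = y u" and ne: "x \<noteq> y"
    let ?p = "(x,y)"
    have pP: "?p \<in> P" using xD yD ne P_def by simp
    have le: "\<tau> ?p \<le> u" using u imageI[OF pP, of \<tau>] by (rule bspec)
    have xL: "x \<in> lim_set X F" using xD DL by blast
    have yL: "y \<in> lim_set X F" using yD DL by blast
    have "x (\<tau> ?p) = F u (\<tau> ?p) (x u)" using limD2[OF xL le] by simp
    also have "\<dots> = F u (\<tau> ?p) (y u)" using eq by simp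
    also have "\<dots> = y (\<tau> ?p)" using limD2[OF yL le] by simp
    finally show False using tau[OF pP] by simp
  qed
qed

lemma rho_add:
  assumes g: "g \<in> smash (lim_set X F) bp" and h: "h \<in> smash (lim_set X F) bp"
  shows "rho bp (\<lambda>x. g x + h x) = (\<lambda>t y. rho bp g t y + rho bp h t y)"
proof (intro ext)
  fix t y
  define S where "S = {y. g y \<noteq> 0} \<union> {y. h y \<noteq> 0}"
  have fS: "finite S" using smashD(2)[OF g] smashD(2)[OF h] S_def by simp
  have e1: "rho bp (\<lambda>x. g x + h x) t y = (if y = bp t then 0 else (\<Sum>x\<in>{x\<in>S. x t = y}. g x + h x))"
    unfolding rho_def by (rule push_eq[OF fS]) (auto simp: S_def)
  moreover have e2: "rho bp g t y = (if y = bp t then 0 else sum g {x\<in>S. x t = y})"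
    unfolding rho_def by (rule push_eq[OF fS]) (auto simp: S_def)
  moreover have e3: "rho bp h t y = (if y = bp t then 0 else sum h {x\<in>S. x t = y})"
    unfolding rho_def by (rule push_eq[OF fS]) (auto simp: S_def)
  show "rho bp (\<lambda>x. g x + h x) t y = rho bp g t y + rho bp h t y"
  proof (cases "y = bp t")
    case True then show ?thesis unfolding e1 e2 e3 by simp
  next
    case False then show ?thesis unfolding e1 e2 e3 by (simp only: if_False sum.distrib)
  qed
qed

lemma rho_in:
  assumes g: "g \<in> smash (lim_set X F) bp"
  shows "rho bp g \<in> G_lim X bp F"
  unfolding G_lim_def
proof (intro CollectI conjI allI impI)
  fix t
  have "{y. rho bp g t y \<noteq> 0} \<subseteq> (\<lambda>x. x t) ` {x. g x \<noteq> 0}"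
  proof
    fix y assume "y \<in> {y. rho bp g t y \<noteq> 0}"
    then have ne: "rho bp g t y \<noteq> 0" by simp
    have "{x. g x \<noteq> 0 \<and> x t = y} \<noteq> {}"
    proof
      assume e: "{x. g x \<noteq> 0 \<and> x t = y} = {}"
      have "rho bp g t y = (if y = bp t then 0 else sum g {x. g x \<noteq> 0 \<and> x t = y})"
        unfolding rho_def push_def by simp
      then have "rho bp g t y = 0" unfolding e by simp
      then show False using ne by simp
    qed
    then show "y \<in> (\<lambda>x. x t) ` {x. g x \<noteq> 0}" by auto
  qed
  then have fin: "finite {y. rho bp g t y \<noteq> 0}"
    using smashD(2)[OF g] finite_subset by blast
  have out: "rho bp g t y = 0" if "y \<notin> X t" for y
  proof -
    have "{x. g x \<noteq> 0 \<and> x t = y} = {}"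
      using smash_lim[OF g] limD1 that by blast
    then show ?thesis unfolding rho_def push_def by (simp only: sum.empty if_cancel)
  qed
  show "rho bp g t \<in> smash (X t) (bp t)"
  proof -
    have "rho bp g t (bp t) = 0" by (simp add: rho_def push_def)
    then show ?thesis unfolding smash_def using fin out by blast
  qed
next
  fix t s :: 'i assume st: "s \<le> t"
  have "push (F t s) (bp s) (rho bp g t) = push (\<lambda>x. F t s (x t)) (bp s) g"
    unfolding rho_def by (rule push_comp[of g "F t s" "bp t" "bp s", OF smashD(2)[OF g] Fbp[OF st]])
  also have "\<dots> = push (\<lambda>x. x s) (bp s) g"
    by (rule push_cong) (use smash_lim[OF g] limD2 st in blast)
  finally show "push (F t s) (bp s) (rho bp g t) = rho bp g s" unfolding rho_def .
qed

lemma rho_inj: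
  assumes g: "g \<in> smash (lim_set X F) bp" and h: "h \<in> smash (lim_set X F) bp"
    and eq: "rho bp g = rho bp h"
  shows "g = h"
proof
  fix x
  define D where "D = {x. g x \<noteq> 0} \<union> {x. h x \<noteq> 0} \<union> {bp}"
  have fD: "finite D" unfolding D_def using smashD(2)[OF g] smashD(2)[OF h] by blast
  have DL: "D \<subseteq> lim_set X F" unfolding D_def using smash_lim[OF g] smash_lim[OF h] bp_lim by blast
  obtain t where inj: "inj_on (\<lambda>x. x t) D" using sep[OF fD DL] by blast
  show "g x = h x"
  proof (cases "x \<in> D \<and> x \<noteq> bp")
    case False
    then show ?thesis
    proof (cases "x = bp")
      case True then show ?thesis using smashD(1)[OF g] smashD(1)[OF h] by simp
    next
      case False then have "x \<notin> D" using \<open>\<not> (x \<in> D \<and> x \<noteq> bp)\<close> by blast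
      then show ?thesis unfolding D_def by simp
    qed
  next
    case True
    have xD: "x \<in> D" and xb: "x \<noteq> bp" using True by auto
    have bD: "bp \<in> D" unfolding D_def by blast
    have xt: "x t \<noteq> bp t" using inj xD bD xb unfolding inj_on_def by blast
    have one: "{y\<in>D. y t = x t} = {x}" using inj xD unfolding inj_on_def by blast
    have "rho bp g t (x t) = (if x t = bp t then 0 else sum g {y\<in>D. y t = x t})"
      unfolding rho_def by (rule push_eq[OF fD]) (unfold D_def, blast)
    then have G: "rho bp g t (x t) = g x" using xt one by simp
    have "rho bp h t (x t) = (if x t = bp t then 0 else sum h {y\<in>D. y t = x t})"
      unfolding rho_def by (rule push_eq[OF fD]) (unfold D_def, blast)
    then have H: "rho bp h t (x t) = h x" using xt one by simp
    show ?thesis using G H eq by simp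
  qed
qed

context
  fixes \<phi> :: "'i \<Rightarrow> 'a \<Rightarrow> 'b::ab_group_add"
  assumes phi: "\<phi> \<in> G_lim X bp F"
begin

lemma Gs: "\<phi> t \<in> smash (X t) (bp t)"
  using phi unfolding G_lim_def by blast

lemma Gc: "s \<le> t \<Longrightarrow> push (F t s) (bp s) (\<phi> t) = \<phi> s"
  using phi unfolding G_lim_def by blast

definition c :: "'i \<Rightarrow> nat" where "c t = card {y. \<phi> t y \<noteq> 0}"

lemma spfin: "finite {y. \<phi> t y \<noteq> 0}" using smashD(2)[OF Gs] .

lemma spX: "\<phi> t y \<noteq> 0 \<Longrightarrow> y \<in> X t" using smashD(3)[OF Gs[of t], of y] by blast

lemma spbp: "\<phi> t (bp t) = 0" using smashD(1)[OF Gs] .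

lemma phi_val: assumes st: "s \<le> t"
  shows "\<phi> s z = (if z = bp s then 0 else sum (\<phi> t) {y. \<phi> t y \<noteq> 0 \<and> F t s y = z})"
proof -
  have "\<phi> s z = push (F t s) (bp s) (\<phi> t) z" using Gc[OF st] by simp
  then show ?thesis by (simp only: push_def)
qed

lemma sub: assumes st: "s \<le> t" shows "{z. \<phi> s z \<noteq> 0} \<subseteq> F t s ` {y. \<phi> t y \<noteq> 0}"
proof
  fix z assume "z \<in> {z. \<phi> s z \<noteq> 0}"
  then have nz: "\<phi> s z \<noteq> 0" by simp
  have "{y. \<phi> t y \<noteq> 0 \<and> F t s y = z} \<noteq> {}"
  proof
    assume e: "{y. \<phi> t y \<noteq> 0 \<and> F t s y = z} = {}"
    have "\<phi> s z = (if z = bp s then 0 else sum (\<phi> t) {y. \<phi> t y \<noteq> 0 \<and> F t s y = z})"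
      by (rule phi_val[OF st])
    then have "\<phi> s z = 0" unfolding e by (simp only: sum.empty if_cancel)
    then show False using nz by simp
  qed
  then show "z \<in> F t s ` {y. \<phi> t y \<noteq> 0}" by blast
qed

lemma cmono: assumes st: "s \<le> t" shows "c s \<le> c t"
proof -
  have "c s \<le> card (F t s ` {y. \<phi> t y \<noteq> 0})"
    unfolding c_def by (rule card_mono[OF finite_imageI[OF spfin] sub[OF st]])
  also have "\<dots> \<le> c t" unfolding c_def by (rule card_image_le[OF spfin])
  finally show ?thesis .
qed

lemma cbound: "\<exists>N. \<forall>t. c t \<le> N"
proof (rule ccontr)
  assume "\<not> (\<exists>N. \<forall>t. c t \<le> N)"
  then have "\<forall>n. \<exists>t. n < c t" by (simp add: not_le)
  from choice[OF this] obtain f where f0: "\<forall>n. n < c (f n)" by blast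
  have f: "\<And>n. n < c (f n)" using f0 by blast
  have "countable (range f)" by simp
  then obtain u where u: "\<forall>s\<in>range f. s \<le> u" using ubC by blast
  have "f (c u) \<le> u" using u by simp
  then have "c (f (c u)) \<le> c u" by (rule cmono)
  then show False using f[of "c u"] by simp
qed

lemma cmax: "\<exists>t0. \<forall>t. c t \<le> c t0"
proof -
  obtain N where N: "\<forall>t. c t \<le> N" using cbound by blast
  have "\<exists>x. True \<and> (\<forall>y. True \<longrightarrow> c y \<le> c x)"
    by (rule ex_has_greatest_nat[of "\<lambda>t. True" undefined c "Suc N"]) (use N in \<open>auto simp: less_Suc_eq_le\<close>)
  then show ?thesis by simp
qed

abbreviation Sp :: "'i \<Rightarrow> 'a set" where "Sp t \<equiv> {y. \<phi> t y \<noteq> 0}"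

definition t0 :: 'i where "t0 = (SOME t0. \<forall>t. c t \<le> c t0)"

lemma t0max: "c t \<le> c t0"
proof -
  have "\<forall>t. c t \<le> c t0" unfolding t0_def using cmax by (rule someI_ex)
  then show ?thesis by blast
qed

lemma ceq: assumes "t0 \<le> t" shows "c t = c t0"
  using cmono[OF assms] t0max[of t] by simp

lemma bijF:
  assumes s0: "t0 \<le> s" and st: "s \<le> t"
  shows "bij_betw (F t s) (Sp t) (Sp s)"
    and "\<And>y. y \<in> Sp t \<Longrightarrow> \<phi> s (F t s y) = \<phi> t y"
proof -
  define P' where "P' = {y \<in> Sp t. F t s y \<in> Sp s}"
  have h1: "Sp s \<subseteq> F t s ` P'"
  proof
    fix z assume z: "z \<in> Sp s"
    then obtain y where y: "y \<in> Sp t" "z = F t s y" using sub[OF st] by blast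
    then have "y \<in> P'" unfolding P'_def using z by blast
    then show "z \<in> F t s ` P'" using y by blast
  qed
  have t0t: "t0 \<le> t" using s0 st by (rule order_trans)
  have cs: "card (Sp s) = card (Sp t)" using ceq[OF s0] ceq[OF t0t] unfolding c_def by simp
  have P'sub: "P' \<subseteq> Sp t" unfolding P'_def by blast
  have fP': "finite P'" using finite_subset[OF P'sub spfin] .
  have "card (Sp s) \<le> card (F t s ` P')" by (rule card_mono[OF finite_imageI[OF fP'] h1])
  also have "\<dots> \<le> card P'" by (rule card_image_le[OF fP'])
  also have "\<dots> \<le> card (Sp t)" by (rule card_mono[OF spfin P'sub])
  finally have chain: "card (Sp s) \<le> card (F t s ` P')" "card (F t s ` P') \<le> card P'" "card P' \<le> card (Sp t)"
    using card_image_le[OF fP'] card_mono[OF spfin P'sub] card_mono[OF finite_imageI[OF fP'] h1] by auto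
  have cP': "card P' = card (Sp t)" using chain cs by linarith
  have P'eq: "P' = Sp t" by (rule card_subset_eq[OF spfin P'sub cP'])
  have cim: "card (F t s ` P') = card P'" using chain cs cP' by linarith
  have inj: "inj_on (F t s) P'" by (rule eq_card_imp_inj_on[OF fP' cim])
  have img: "F t s ` P' = Sp s"
  proof
    show "F t s ` P' \<subseteq> Sp s" unfolding P'_def by blast
    show "Sp s \<subseteq> F t s ` P'" by (rule h1)
  qed
  show "bij_betw (F t s) (Sp t) (Sp s)" unfolding bij_betw_def using inj img P'eq by simp
  fix y assume y: "y \<in> Sp t"
  have yP: "y \<in> P'" using y P'eq by simp
  have zS: "F t s y \<in> Sp s" using yP unfolding P'_def by blast
  have zb: "F t s y \<noteq> bp s" using zS spbp[of s] by auto
  have one: "{y'. \<phi> t y' \<noteq> 0 \<and> F t s y' = F t s y} = {y}"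
  proof
    show "{y'. \<phi> t y' \<noteq> 0 \<and> F t s y' = F t s y} \<subseteq> {y}"
    proof
      fix y' assume "y' \<in> {y'. \<phi> t y' \<noteq> 0 \<and> F t s y' = F t s y}"
      then have "y' \<in> P'" "F t s y' = F t s y" using P'eq by auto
      then show "y' \<in> {y}" using inj yP unfolding inj_on_def by blast
    qed
    show "{y} \<subseteq> {y'. \<phi> t y' \<noteq> 0 \<and> F t s y' = F t s y}" using y by simp
  qed
  have "\<phi> s (F t s y) = (if F t s y = bp s then 0 else sum (\<phi> t) {y'. \<phi> t y' \<noteq> 0 \<and> F t s y' = F t s y})"
    by (rule phi_val[OF st])
  also have "\<dots> = \<phi> t y" unfolding one using zb by simp
  finally show "\<phi> s (F t s y) = \<phi> t y" .
qed

definition yu :: "'i \<Rightarrow> 'a \<Rightarrow> 'a" where "yu u a = inv_into (Sp u) (F u t0) a"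

lemma bij0: "t0 \<le> u \<Longrightarrow> bij_betw (F u t0) (Sp u) (Sp t0)"
  by (rule bijF(1)[OF order_refl])

lemma yu_in: assumes u: "t0 \<le> u" and a: "a \<in> Sp t0" shows "yu u a \<in> Sp u"
proof -
  have "a \<in> F u t0 ` Sp u" using bij_betw_imp_surj_on[OF bij0[OF u]] a by simp
  then show ?thesis unfolding yu_def by (rule inv_into_into)
qed

lemma yu_F: assumes u: "t0 \<le> u" and a: "a \<in> Sp t0" shows "F u t0 (yu u a) = a"
proof -
  have "a \<in> F u t0 ` Sp u" using bij_betw_imp_surj_on[OF bij0[OF u]] a by simp
  then show ?thesis unfolding yu_def by (rule f_inv_into_f)
qed

lemma yu_uniq: assumes u: "t0 \<le> u" and y: "y \<in> Sp u" and e: "F u t0 y = a" shows "y = yu u a"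
proof -
  have "inv_into (Sp u) (F u t0) a = y"
    by (rule inv_into_f_eq[OF bij_betw_imp_inj_on[OF bij0[OF u]] y e])
  then show ?thesis unfolding yu_def by simp
qed

lemma yuX: "t0 \<le> u \<Longrightarrow> a \<in> Sp t0 \<Longrightarrow> yu u a \<in> X u"
  using spX yu_in by blast

lemma yu_coh: assumes u: "t0 \<le> u" and uw: "u \<le> w" and a: "a \<in> Sp t0"
  shows "F w u (yu w a) = yu u a"
proof -
  have w: "t0 \<le> w" using u uw by (rule order_trans)
  have inS: "F w u (yu w a) \<in> Sp u" by (rule bij_betw_apply[OF bijF(1)[OF u uw] yu_in[OF w a]])
  have "F u t0 (F w u (yu w a)) = F w t0 (yu w a)" by (rule Fcomp[OF u uw yuX[OF w a]])
  also have "\<dots> = a" by (rule yu_F[OF w a])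
  finally show ?thesis by (rule yu_uniq[OF u inS])
qed

definition ub :: "'i \<Rightarrow> 'i" where "ub t = (SOME u. t \<le> u \<and> t0 \<le> u)"

lemma ub: "t \<le> ub t \<and> t0 \<le> ub t"
  unfolding ub_def by (rule someI_ex) (rule ub2)

definition xa :: "'a \<Rightarrow> 'i \<Rightarrow> 'a" where "xa a t = F (ub t) t (yu (ub t) a)"

lemma xval: assumes a: "a \<in> Sp t0" and tu: "t \<le> u" and u: "t0 \<le> u"
  shows "xa a t = F u t (yu u a)"
proof -
  obtain w where w: "ub t \<le> w" "u \<le> w" using ub2 by blast
  have ut: "t \<le> ub t" and u0: "t0 \<le> ub t" using ub by auto
  have w0: "t0 \<le> w" using u w(2) by (rule order_trans)
  have "xa a t = F (ub t) t (F w (ub t) (yu w a))" unfolding xa_def using yu_coh[OF u0 w(1) a] by simp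
  also have "\<dots> = F w t (yu w a)" by (rule Fcomp[OF ut w(1) yuX[OF w0 a]])
  also have "\<dots> = F u t (F w u (yu w a))" by (rule Fcomp[OF tu w(2) yuX[OF w0 a], symmetric])
  also have "\<dots> = F u t (yu u a)" using yu_coh[OF u w(2) a] by simp
  finally show ?thesis .
qed

lemma xa_lim: assumes a: "a \<in> Sp t0" shows "xa a \<in> lim_set X F"
  unfolding lim_set_def
proof (intro CollectI conjI allI impI)
  fix t
  have ut: "t \<le> ub t" and u0: "t0 \<le> ub t" using ub by auto
  show "xa a t \<in> X t" unfolding xa_def by (rule FX[OF ut yuX[OF u0 a]])
next
  fix t s :: 'i assume st: "s \<le> t"
  have ut: "t \<le> ub t" and u0: "t0 \<le> ub t" using ub by auto
  have us: "s \<le> ub t" using st ut by (rule order_trans)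
  have "F t s (xa a t) = F t s (F (ub t) t (yu (ub t) a))" unfolding xa_def by simp
  also have "\<dots> = F (ub t) s (yu (ub t) a)" by (rule Fcomp[OF st ut yuX[OF u0 a]])
  also have "\<dots> = xa a s" by (rule xval[OF a us u0, symmetric])
  finally show "F t s (xa a t) = xa a s" .
qed

lemma xa_t0: assumes a: "a \<in> Sp t0" shows "xa a t0 = a"
  using xval[OF a order_refl order_refl] yu_F[OF order_refl a] by simp

definition GG :: "('i \<Rightarrow> 'a) \<Rightarrow> 'b" where
  "GG x = (if x \<in> xa ` Sp t0 then \<phi> t0 (x t0) else 0)"

lemma xa_inj: "inj_on xa (Sp t0)"
proof (rule inj_onI)
  fix a b assume a: "a \<in> Sp t0" and b: "b \<in> Sp t0" and e: "xa a = xa b"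
  have "xa a t0 = xa b t0" using e by simp
  then show "a = b" using xa_t0[OF a] xa_t0[OF b] by simp
qed

lemma GG_smash: "GG \<in> smash (lim_set X F) bp"
  unfolding smash_def
proof (intro CollectI conjI allI impI)
  show "GG bp = 0" unfolding GG_def using spbp[of t0] by simp
  have "{y. GG y \<noteq> 0} \<subseteq> xa ` Sp t0" unfolding GG_def by auto
  then show "finite {y. GG y \<noteq> 0}" using finite_imageI[OF spfin] finite_subset by blast
  fix y assume y: "y \<notin> lim_set X F"
  have "y \<notin> xa ` Sp t0" using y xa_lim by blast
  then show "GG y = 0" unfolding GG_def by simp
qed

lemma GG_rho: "rho bp GG = \<phi>"
proof (intro ext)
  fix t z
  obtain u where tu: "t \<le> u" and u: "t0 \<le> u" using ub2 by blast
  define Q0 where "Q0 = Sp t0"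
  have fQ: "finite (xa ` Q0)" unfolding Q0_def using spfin by simp
  have suppG: "{x. GG x \<noteq> 0} \<subseteq> xa ` Q0" unfolding GG_def Q0_def by auto
  have e1: "rho bp GG t z = (if z = bp t then 0 else sum GG {x \<in> xa ` Q0. x t = z})"
    unfolding rho_def by (rule push_eq[OF fQ suppG])
  have e2': "\<phi> t z = push (F u t) (bp t) (\<phi> u) z" using Gc[OF tu] by simp
  have e2: "\<phi> t z = (if z = bp t then 0 else sum (\<phi> u) {y \<in> Sp u. F u t y = z})"
    unfolding e2' by (rule push_eq[OF spfin]) simp
  show "rho bp GG t z = \<phi> t z"
  proof (cases "z = bp t")
    case True then show ?thesis using e1 e2 by simp
  next
    case False
    have s1: "{x \<in> xa ` Q0. x t = z} = xa ` {a\<in>Q0. xa a t = z}" by blast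
    have inj1: "inj_on xa {a\<in>Q0. xa a t = z}"
      by (rule inj_on_subset[OF xa_inj]) (auto simp: Q0_def)
    have L: "sum GG {x \<in> xa ` Q0. x t = z} = (\<Sum>a\<in>{a\<in>Q0. xa a t = z}. \<phi> t0 a)"
    proof -
      have "sum GG {x \<in> xa ` Q0. x t = z} = sum (GG \<circ> xa) {a\<in>Q0. xa a t = z}"
        unfolding s1 by (rule sum.reindex[OF inj1])
      also have "\<dots> = (\<Sum>a\<in>{a\<in>Q0. xa a t = z}. \<phi> t0 a)"
      proof (rule sum.cong[OF refl])
        fix a assume "a \<in> {a\<in>Q0. xa a t = z}"
        then have a: "a \<in> Sp t0" unfolding Q0_def by simp
        have "xa a \<in> xa ` Sp t0" using a by simp
        then show "(GG \<circ> xa) a = \<phi> t0 a" unfolding GG_def using xa_t0[OF a] by simp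
      qed
      finally show ?thesis .
    qed
    have s2: "{y \<in> Sp u. F u t y = z} = yu u ` {a\<in>Q0. F u t (yu u a) = z}"
    proof
      show "{y \<in> Sp u. F u t y = z} \<subseteq> yu u ` {a\<in>Q0. F u t (yu u a) = z}"
      proof
        fix y assume y: "y \<in> {y \<in> Sp u. F u t y = z}"
        then have yS: "y \<in> Sp u" and yz: "F u t y = z" by auto
        have aQ: "F u t0 y \<in> Q0" unfolding Q0_def by (rule bij_betw_apply[OF bij0[OF u] yS])
        have yy: "y = yu u (F u t0 y)" by (rule yu_uniq[OF u yS refl])
        have "F u t0 y \<in> {a\<in>Q0. F u t (yu u a) = z}" using aQ yz yy by simp
        then show "y \<in> yu u ` {a\<in>Q0. F u t (yu u a) = z}" using yy by blast
      qed
      show "yu u ` {a\<in>Q0. F u t (yu u a) = z} \<subseteq> {y \<in> Sp u. F u t y = z}"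
        using yu_in[OF u] unfolding Q0_def by blast
    qed
    have inj2: "inj_on (yu u) {a\<in>Q0. F u t (yu u a) = z}"
    proof (rule inj_onI)
      fix a b assume a: "a \<in> {a\<in>Q0. F u t (yu u a) = z}" and b: "b \<in> {a\<in>Q0. F u t (yu u a) = z}"
        and e: "yu u a = yu u b"
      have aQ: "a \<in> Sp t0" and bQ: "b \<in> Sp t0" using a b unfolding Q0_def by auto
      have "F u t0 (yu u a) = F u t0 (yu u b)" using e by simp
      then show "a = b" using yu_F[OF u aQ] yu_F[OF u bQ] by simp
    qed
    have R: "sum (\<phi> u) {y \<in> Sp u. F u t y = z} = (\<Sum>a\<in>{a\<in>Q0. xa a t = z}. \<phi> t0 a)"
    proof -
      have "sum (\<phi> u) {y \<in> Sp u. F u t y = z} = sum (\<phi> u \<circ> yu u) {a\<in>Q0. F u t (yu u a) = z}"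
        unfolding s2 by (rule sum.reindex[OF inj2])
      also have "\<dots> = (\<Sum>a\<in>{a\<in>Q0. xa a t = z}. \<phi> t0 a)"
      proof (rule sum.cong)
        show "{a\<in>Q0. F u t (yu u a) = z} = {a\<in>Q0. xa a t = z}"
          using xval[OF _ tu u] unfolding Q0_def by auto
        fix a assume "a \<in> {a\<in>Q0. xa a t = z}"
        then have a: "a \<in> Sp t0" unfolding Q0_def by simp
        have "\<phi> t0 (F u t0 (yu u a)) = \<phi> u (yu u a)"
          by (rule bijF(2)[OF order_refl u yu_in[OF u a]])
        then show "(\<phi> u \<circ> yu u) a = \<phi> t0 a" using yu_F[OF u a] by simp
      qed
      finally show ?thesis .
    qed
    show ?thesis using e1 e2 L R False by simp
  qed
qed

lemma rho_surj: "\<exists>g\<in>smash (lim_set X F) bp. rho bp g = \<phi>"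
  using GG_smash GG_rho by blast

end

end

theorem mainTheorem10:
  fixes X :: "'i::order \<Rightarrow> 'a set" and bp :: "'i \<Rightarrow> 'a"
    and F :: "'i \<Rightarrow> 'i \<Rightarrow> 'a \<Rightarrow> 'a"
  assumes "aleph1_directed (UNIV :: 'i set)"
    and "pointed_diagram X bp F"
  shows "bij_betw (rho bp :: (('i \<Rightarrow> 'a) \<Rightarrow> 'b::ab_group_add) \<Rightarrow> _)
            (smash (lim_set X F) bp) (G_lim X bp F)
       \<and> (\<forall>g\<in>smash (lim_set X F) bp. \<forall>h\<in>smash (lim_set X F) bp.
            rho bp (\<lambda>x. g x + h x) = (\<lambda>t y. rho bp g t y + rho bp h t y))"
proof -
  have inj: "inj_on (rho bp :: (('i \<Rightarrow> 'a) \<Rightarrow> 'b::ab_group_add) \<Rightarrow> _) (smash (lim_set X F) bp)"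
  proof (rule inj_onI)
    fix g h :: "('i \<Rightarrow> 'a) \<Rightarrow> 'b"
    assume "g \<in> smash (lim_set X F) bp" "h \<in> smash (lim_set X F) bp" "rho bp g = rho bp h"
    then show "g = h" by (rule rho_inj[OF assms])
  qed
  have img: "(rho bp :: (('i \<Rightarrow> 'a) \<Rightarrow> 'b::ab_group_add) \<Rightarrow> _) ` smash (lim_set X F) bp = G_lim X bp F"
  proof
    show "(rho bp :: (('i \<Rightarrow> 'a) \<Rightarrow> 'b::ab_group_add) \<Rightarrow> _) ` smash (lim_set X F) bp \<subseteq> G_lim X bp F"
      using rho_in[OF assms] by blast
    show "G_lim X bp F \<subseteq> (rho bp :: (('i \<Rightarrow> 'a) \<Rightarrow> 'b::ab_group_add) \<Rightarrow> _) ` smash (lim_set X F) bp"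
    proof
      fix \<phi> :: "'i \<Rightarrow> 'a \<Rightarrow> 'b" assume p: "\<phi> \<in> G_lim X bp F"
      obtain g where "g \<in> smash (lim_set X F) bp" "rho bp g = \<phi>"
        using rho_surj[OF assms p] by blast
      then show "\<phi> \<in> rho bp ` smash (lim_set X F) bp" by blast
    qed
  qed
  have bij: "bij_betw (rho bp :: (('i \<Rightarrow> 'a) \<Rightarrow> 'b::ab_group_add) \<Rightarrow> _)
            (smash (lim_set X F) bp) (G_lim X bp F)"
      unfolding bij_betw_def using inj img by (rule conjI)
  show ?thesis
    by (rule conjI[OF bij]) (use rho_add[OF assms] in blast)
qed

end
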